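(* The singular braid monoid $SB_n$ has a presentation with generators $a_{ts},a_{ts}^{-1}$ for $1\le s<t\le n$ and $b_{qp}$ for $1\le p<q\le n$, and relations $$\begin{aligned} &a_{ts}a_{rq}=a_{rq}a_{ts}\ \text{ for } (t-r)(t-q)(s-r)(s-q)>0,\\ &a_{ts}a_{sr}=a_{tr}a_{ts}=a_{sr}a_{tr}\ \text{ for } 1\le r<s<t\le n,\\ &a_{ts}a_{ts}^{-1}=a_{ts}^{-1}a_{ts}=1\ \text{ for } 1\le s<t\le n,\\ &a_{ts}b_{rq}=b_{rq}a_{ts}\ \text{ for } (t-r)(t-q)(s-r)(s-q)>0,\\ &a_{ts}b_{ts}=b_{ts}a_{ts}\ \text{ for } 1\le s<t\le n,\\ &a_{ts}b_{sr}=b_{tr}a_{ts},\quad a_{sr}b_{tr}=b_{ts}a_{sr},\quad a_{tr}b_{ts}=b_{sr}a_{tr}\ \text{ for } 1\le r<s<t\le n,\\ &b_{ts}b_{rq}=b_{rq}b_{ts}\ \text{ for } (t-r)(t-q)(s-r)(s-q)>0, \end{aligned}$$ where the generators correspond to the following elements of $SB_n$: $a_{ts}=(\sigma_{t-1}\cdots\sigma_{s+1})\sigma_s(\sigma_{s+1}^{-1}\cdots\sigma_{t-1}^{-1})$, $a_{ts}^{-1}=(\sigma_{t-1}\cdots\sigma_{s+1})\sigma_s^{-1}(\sigma_{s+1}^{-1}\cdots\sigma_{t-1}^{-1})$, $b_{qp}=(\sigma_{q-1}\cdots\sigma_{p+1})x_p(\sigma_{p+1}^{-1}\cdots\sigma_{q-1}^{-1})$.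 That is, the assignment of these elements to the generators induces an isomorphism from the monoid so presented onto $SB_n$.
   Context: Fix $n\ge 2$. $SB_n$ is the monoid with generators $\sigma_i,\sigma_i^{-1},x_i$ ($i=1,\dots,n-1$) and relations: $\sigma_i\sigma_j=\sigma_j\sigma_i$ and $x_ix_j=x_jx_i$ if $|i-j|>1$; $x_i\sigma_j=\sigma_jx_i$ if $|i-j|\ne1$; $\sigma_i\sigma_{i+1}\sigma_i=\sigma_{i+1}\sigma_i\sigma_{i+1}$; $\sigma_i\sigma_{i+1}x_i=x_{i+1}\sigma_i\sigma_{i+1}$; $\sigma_{i+1}\sigma_ix_{i+1}=x_i\sigma_{i+1}\sigma_i$; $\sigma_i\sigma_i^{-1}=\sigma_i^{-1}\sigma_i=1$. *)

theory Defs
  imports Main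
begin

text \<open>Monoid presentations: words are lists of generators; the presented monoid is the
  set of words modulo the monoid congruence generated by a set of relations R
  (pairs of words).\<close>

inductive eqv :: "('g list \<times> 'g list) set \<Rightarrow> 'g list \<Rightarrow> 'g list \<Rightarrow> bool" for R where
  refl: "eqv R w w"
| sym: "eqv R w v \<Longrightarrow> eqv R v w"
| trans: "eqv R u v \<Longrightarrow> eqv R v w \<Longrightarrow> eqv R u w"
| rel: "(x, y) \<in> R \<Longrightarrow> eqv R (u @ x @ v) (u @ y @ v)"

datatype sbgen = Sig nat | SigInv nat | X nat

definition sb_gens :: "nat \<Rightarrow> sbgen set" where
  "sb_gens n = {Sig i | i. 1 \<le> i \<and> i < n} \<union> {SigInv i | i. 1 \<le> i \<and> i < n}
              \<union> {X i | i. 1 \<le> i \<and> i < n}"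

definition sb_rels :: "nat \<Rightarrow> (sbgen list \<times> sbgen list) set" where
  "sb_rels n =
     {([Sig i, Sig j], [Sig j, Sig i]) | i j. 1 \<le> i \<and> i < n \<and> 1 \<le> j \<and> j < n \<and> \<bar>int i - int j\<bar> > 1}
   \<union> {([X i, X j], [X j, X i]) | i j. 1 \<le> i \<and> i < n \<and> 1 \<le> j \<and> j < n \<and> \<bar>int i - int j\<bar> > 1}
   \<union> {([X i, Sig j], [Sig j, X i]) | i j. 1 \<le> i \<and> i < n \<and> 1 \<le> j \<and> j < n \<and> \<bar>int i - int j\<bar> \<noteq> 1}
   \<union> {([Sig i, Sig (i+1), Sig i], [Sig (i+1), Sig i, Sig (i+1)]) | i. 1 \<le> i \<and> i + 1 < n}
   \<union> {([Sig i, Sig (i+1), X i], [X (i+1), Sig i, Sig (i+1)]) | i. 1 \<le> i \<and> i + 1 < n}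
   \<union> {([Sig (i+1), Sig i, X (i+1)], [X i, Sig (i+1), Sig i]) | i. 1 \<le> i \<and> i + 1 < n}
   \<union> {([Sig i, SigInv i], []) | i. 1 \<le> i \<and> i < n}
   \<union> {([SigInv i, Sig i], []) | i. 1 \<le> i \<and> i < n}"

datatype bkgen = A nat nat | Ainv nat nat | B nat nat

definition bk_gens :: "nat \<Rightarrow> bkgen set" where
  "bk_gens n = {A t s | t s. 1 \<le> s \<and> s < t \<and> t \<le> n}
              \<union> {Ainv t s | t s. 1 \<le> s \<and> s < t \<and> t \<le> n}
              \<union> {B t s | t s. 1 \<le> s \<and> s < t \<and> t \<le> n}"

definition sep :: "nat \<Rightarrow> nat \<Rightarrow> nat \<Rightarrow> nat \<Rightarrow> bool" where
  "sep t s r q \<longleftrightarrow> (int t - int r) * (int t - int q) * (int s - int r) * (int s - int q) > 0"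

definition pr :: "nat \<Rightarrow> nat \<Rightarrow> nat \<Rightarrow> bool" where
  "pr n t s \<longleftrightarrow> 1 \<le> s \<and> s < t \<and> t \<le> n"

definition bk_rels :: "nat \<Rightarrow> (bkgen list \<times> bkgen list) set" where
  "bk_rels n =
     {([A t s, A r q], [A r q, A t s]) | t s r q. pr n t s \<and> pr n r q \<and> sep t s r q}
   \<union> {([A t s, A s r], [A t r, A t s]) | t s r. 1 \<le> r \<and> r < s \<and> s < t \<and> t \<le> n}
   \<union> {([A t r, A t s], [A s r, A t r]) | t s r. 1 \<le> r \<and> r < s \<and> s < t \<and> t \<le> n}
   \<union> {([A t s, Ainv t s], []) | t s. pr n t s}
   \<union> {([Ainv t s, A t s], []) | t s. pr n t s}
   \<union> {([A t s, B r q], [B r q, A t s]) | t s r q. pr n t s \<and> pr n r q \<and> sep t s r q}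
   \<union> {([A t s, B t s], [B t s, A t s]) | t s. pr n t s}
   \<union> {([A t s, B s r], [B t r, A t s]) | t s r. 1 \<le> r \<and> r < s \<and> s < t \<and> t \<le> n}
   \<union> {([A s r, B t r], [B t s, A s r]) | t s r. 1 \<le> r \<and> r < s \<and> s < t \<and> t \<le> n}
   \<union> {([A t r, B t s], [B s r, A t r]) | t s r. 1 \<le> r \<and> r < s \<and> s < t \<and> t \<le> n}
   \<union> {([B t s, B r q], [B r q, B t s]) | t s r q. pr n t s \<and> pr n r q \<and> sep t s r q}"

definition conj_word :: "nat \<Rightarrow> nat \<Rightarrow> sbgen \<Rightarrow> sbgen list" where
  "conj_word t s c = map Sig (rev [s+1..<t]) @ [c] @ map SigInv [s+1..<t]"

fun img :: "bkgen \<Rightarrow> sbgen list" where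
  "img (A t s) = conj_word t s (Sig s)"
| "img (Ainv t s) = conj_word t s (SigInv s)"
| "img (B q p) = conj_word q p (X p)"

definition phi :: "bkgen list \<Rightarrow> sbgen list" where
  "phi w = concat (map img w)"

end

theory Submission
  imports Defs
begin



lemma eqv_app_r: assumes "eqv R a b" shows "eqv R (a@c) (b@c)"
using assms proof (induction rule: eqv.induct)
  case (rel x y u v) then show ?case using eqv.rel[of x y R u "v@c"] by simp
qed (blast intro: eqv.intros)+

lemma eqv_app_l: assumes "eqv R a b" shows "eqv R (c@a) (c@b)"
using assms proof (induction rule: eqv.induct)
  case (rel x y u v) then show ?case using eqv.rel[of x y R "c@u" v] by simp
qed (blast intro: eqv.intros)+

lemma eqv_cong: "eqv R a b \<Longrightarrow> eqv R c d \<Longrightarrow> eqv R (a@c) (b@d)"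
  using eqv.trans eqv_app_l eqv_app_r by metis

declare eqv.trans[trans]

lemma eqv_sub: "eqv R x y \<Longrightarrow> P = u@x@v \<Longrightarrow> Q = u@y@v \<Longrightarrow> eqv R P Q"
  using eqv_app_l eqv_app_r by metis

lemma rel0: "(x,y) \<in> R \<Longrightarrow> eqv R x y"
  using eqv.rel[of x y R "[]" "[]"] by simp

lemma eqv_subd: "eqv R x y \<Longrightarrow> P = u @ x @ drop (length u + length x) P \<Longrightarrow> Q = u @ y @ drop (length u + length x) P \<Longrightarrow> eqv R P Q"
  using eqv_sub by metis

lemma test: "eqv R [a,b] [c] \<Longrightarrow> eqv R [d,a,b,e] [d,c,e]"
  by (erule eqv_subd[where u="[d]"]) simp_all
lemma test2: "eqv R [a,b] [c] \<Longrightarrow> eqv R (w @ [a,b] @ z @ [e]) (w @ [c] @ z @ [e])"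
  by (erule eqv_subd[where u="w"]) simp_all

lemma ins_l: "eqv R w [] \<Longrightarrow> eqv R b (w@b)"
  using eqv_app_r[of R w "[]" b] eqv.sym by auto

lemma inv_conj: assumes "eqv R (p@x) (y@p)" "eqv R (x@x') []" "eqv R (y'@y) []"
  shows "eqv R (p@x') (y'@p)"
proof -
  have "eqv R (p@x') ((y'@y)@p@x')" using ins_l[OF assms(3)] .
  also have "eqv R ((y'@y)@p@x') (y'@(p@x)@x')"
    using eqv_app_r[OF eqv_app_l[OF eqv.sym[OF assms(1)]], of y' x'] by simp
  also have "eqv R (y'@(p@x)@x') (y'@p@(x@x'))" by (simp add: eqv.refl)
  also have "eqv R (y'@p@(x@x')) (y'@p@[])" by (rule eqv_app_l[OF eqv_app_l[OF assms(2)]])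
  finally show ?thesis by simp
qed

lemma cancel_l: assumes "eqv R (a'@a) []" "eqv R (a@b) c" shows "eqv R b (a'@c)"
proof -
  have "eqv R b ((a'@a)@b)" using ins_l[OF assms(1)] .
  also have "eqv R ((a'@a)@b) (a'@c)" using eqv_app_l[OF assms(2), of a'] by simp
  finally show ?thesis .
qed

lemma cancel_r: assumes "eqv R (b@b') []" "eqv R (a@b) c" shows "eqv R a (c@b')"
proof -
  have "eqv R a (a@(b@b'))" using eqv_app_l[OF eqv.sym[OF assms(1)], of a] by simp
  also have "eqv R (a@(b@b')) (c@b')" using eqv_app_r[OF assms(2), of b'] by simp
  finally show ?thesis .
qed




fun idx :: "sbgen \<Rightarrow> nat" where "idx (Sig i) = i" | "idx (SigInv i) = i" | "idx (X i) = i"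

definition okl :: "nat \<Rightarrow> sbgen \<Rightarrow> bool" where "okl n e \<longleftrightarrow> 1 \<le> idx e \<and> idx e < n"
definition far :: "sbgen \<Rightarrow> sbgen \<Rightarrow> bool" where "far e f \<longleftrightarrow> idx e + 2 \<le> idx f \<or> idx f + 2 \<le> idx e"

lemma sb_ss: "1\<le>i \<Longrightarrow> i<n \<Longrightarrow> 1\<le>j \<Longrightarrow> j<n \<Longrightarrow> i+2 \<le> j \<or> j+2 \<le> i \<Longrightarrow> eqv (sb_rels n) [Sig i, Sig j] [Sig j, Sig i]"
  by (rule rel0) (auto simp: sb_rels_def)
lemma sb_xx: "1\<le>i \<Longrightarrow> i<n \<Longrightarrow> 1\<le>j \<Longrightarrow> j<n \<Longrightarrow> i+2 \<le> j \<or> j+2 \<le> i \<Longrightarrow> eqv (sb_rels n) [X i, X j] [X j, X i]"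
  by (rule rel0) (auto simp: sb_rels_def)
lemma sb_xs: "1\<le>i \<Longrightarrow> i<n \<Longrightarrow> 1\<le>j \<Longrightarrow> j<n \<Longrightarrow> i+2 \<le> j \<or> j+2 \<le> i \<or> i = j \<Longrightarrow> eqv (sb_rels n) [X i, Sig j] [Sig j, X i]"
  by (rule rel0) (auto simp: sb_rels_def)
lemma sb_br: "1\<le>i \<Longrightarrow> i+1<n \<Longrightarrow> eqv (sb_rels n) [Sig i, Sig (i+1), Sig i] [Sig (i+1), Sig i, Sig (i+1)]"
  by (rule rel0) (auto simp: sb_rels_def)
lemma sb_r5: "1\<le>i \<Longrightarrow> i+1<n \<Longrightarrow> eqv (sb_rels n) [Sig i, Sig (i+1), X i] [X (i+1), Sig i, Sig (i+1)]"
  by (rule rel0) (auto simp: sb_rels_def)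
lemma sb_r6: "1\<le>i \<Longrightarrow> i+1<n \<Longrightarrow> eqv (sb_rels n) [Sig (i+1), Sig i, X (i+1)] [X i, Sig (i+1), Sig i]"
  by (rule rel0) (auto simp: sb_rels_def)
lemma sb_i1: "1\<le>i \<Longrightarrow> i<n \<Longrightarrow> eqv (sb_rels n) [Sig i, SigInv i] []"
  by (rule rel0) (auto simp: sb_rels_def)
lemma sb_i2: "1\<le>i \<Longrightarrow> i<n \<Longrightarrow> eqv (sb_rels n) [SigInv i, Sig i] []"
  by (rule rel0) (auto simp: sb_rels_def)

lemma sb_sx: "1\<le>i \<Longrightarrow> i<n \<Longrightarrow> 1\<le>j \<Longrightarrow> j<n \<Longrightarrow> i+2 \<le> j \<or> j+2 \<le> i \<or> i = j \<Longrightarrow> eqv (sb_rels n) [Sig j, X i] [X i, Sig j]"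
  using sb_xs eqv.sym by blast

lemma far_pos: "okl n e \<Longrightarrow> okl n f \<Longrightarrow> far e f \<Longrightarrow> \<forall>i. e \<noteq> SigInv i \<Longrightarrow> \<forall>i. f \<noteq> SigInv i
  \<Longrightarrow> eqv (sb_rels n) [e,f] [f,e]"
  by (cases e; cases f) (auto simp: okl_def far_def intro!: sb_ss sb_xs sb_sx sb_xx)

lemma far_l1: "okl n e \<Longrightarrow> okl n f \<Longrightarrow> far e f \<Longrightarrow> \<forall>i. f \<noteq> SigInv i
  \<Longrightarrow> eqv (sb_rels n) [e,f] [f,e]"
proof (cases "\<exists>i. e = SigInv i")
  case True
  assume a: "okl n e" "okl n f" "far e f" "\<forall>i. f \<noteq> SigInv i"
  from True obtain i where e: "e = SigInv i" by blast
  have "eqv (sb_rels n) ([f]@[Sig i]) ([Sig i]@[f])"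
    using far_pos[of n f "Sig i"] a e by (auto simp: okl_def far_def intro: eqv.sym)
  from inv_conj[OF this, of "[SigInv i]" "[SigInv i]"]
  have "eqv (sb_rels n) ([f]@[SigInv i]) ([SigInv i]@[f])"
    using sb_i1 sb_i2 a e by (simp add: okl_def)
  then show ?thesis using e eqv.sym by auto
qed (auto intro: far_pos)

lemma far_letter: "okl n e \<Longrightarrow> okl n f \<Longrightarrow> far e f \<Longrightarrow> eqv (sb_rels n) [e,f] [f,e]"
proof (cases "\<exists>i. f = SigInv i")
  case True
  assume a: "okl n e" "okl n f" "far e f"
  from True obtain i where f: "f = SigInv i" by blast
  have "eqv (sb_rels n) ([e]@[Sig i]) ([Sig i]@[e])"
    using far_l1[of n e "Sig i"] a f by (auto simp: okl_def far_def)
  from inv_conj[OF this, of "[SigInv i]" "[SigInv i]"]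
  show ?thesis using sb_i1 sb_i2 a f by (simp add: okl_def)
qed (auto intro: far_l1)

lemma far_word1: "okl n e \<Longrightarrow> \<forall>f\<in>set v. okl n f \<and> far e f \<Longrightarrow> eqv (sb_rels n) (e#v) (v@[e])"
proof (induction v)
  case Nil then show ?case by (simp add: eqv.refl)
next
  case (Cons f v)
  have "eqv (sb_rels n) ([e,f]@v) ([f,e]@v)" using Cons.prems by (intro eqv_app_r far_letter) auto
  moreover have "eqv (sb_rels n) (e#v) (v@[e])" using Cons by auto
  then have "eqv (sb_rels n) ([f]@(e#v)) ([f]@(v@[e]))" by (rule eqv_app_l)
  ultimately show ?case using eqv.trans by fastforce
qed

lemma far_word: "\<forall>e\<in>set u. okl n e \<Longrightarrow> \<forall>f\<in>set v. okl n f \<Longrightarrow> \<forall>e\<in>set u. \<forall>f\<in>set v. far e f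
  \<Longrightarrow> eqv (sb_rels n) (u@v) (v@u)"
proof (induction u)
  case Nil then show ?case by (simp add: eqv.refl)
next
  case (Cons e u)
  have "eqv (sb_rels n) (u@v) (v@u)" using Cons by auto
  then have "eqv (sb_rels n) (e#u@v) (e#v@u)" using eqv_app_l[of _ _ _ "[e]"] by fastforce
  also have "eqv (sb_rels n) ((e#v)@u) ((v@[e])@u)" using Cons.prems by (intro eqv_app_r far_word1) auto
  then have "eqv (sb_rels n) (e#v@u) (v@e#u)" by simp
  finally show ?case by simp
qed

lemma inv_list: "\<forall>a\<in>set l. 1 \<le> a \<and> a < n \<Longrightarrow>
  eqv (sb_rels n) (map Sig l @ map SigInv (rev l)) [] \<and> eqv (sb_rels n) (map SigInv (rev l) @ map Sig l) []"
proof (induction l)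
  case Nil then show ?case by (simp add: eqv.refl)
next
  case (Cons a l)
  have 1: "eqv (sb_rels n) ([Sig a] @ (map Sig l @ map SigInv (rev l)) @ [SigInv a]) ([Sig a] @ [] @ [SigInv a])"
    using Cons by (intro eqv_app_l eqv_app_r) auto
  have 2: "eqv (sb_rels n) (map SigInv (rev l) @ [SigInv a, Sig a] @ map Sig l) (map SigInv (rev l) @ [] @ map Sig l)"
    using Cons sb_i2 by (intro eqv_app_l eqv_app_r) auto
  have a: "1 \<le> a" "a < n" using Cons.prems by auto
  have 3: "eqv (sb_rels n) (map Sig (a # l) @ map SigInv (rev (a # l))) []"
    using eqv.trans[OF 1[simplified] sb_i1[OF a]] by simp
  have 4: "eqv (sb_rels n) (map SigInv (rev l) @ map Sig l) []" using Cons by simp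
  have 5: "eqv (sb_rels n) (map SigInv (rev (a # l)) @ map Sig (a # l)) []"
    using eqv.trans[OF 2[simplified] 4] by simp
  show ?case using 3 5 by blast
qed




abbreviation "kind c \<equiv> (c = Sig \<or> c = X)"

lemma lc2: "kind c \<Longrightarrow> 1\<le>i \<Longrightarrow> i+1<n \<Longrightarrow> eqv (sb_rels n) [Sig i, Sig (i+1), c i] [c (i+1), Sig i, Sig (i+1)]"
  using sb_br[of i n] sb_r5[of i n] by (elim disjE) simp_all
lemma lc3: "kind c \<Longrightarrow> 1\<le>i \<Longrightarrow> i+1<n \<Longrightarrow> eqv (sb_rels n) [Sig (i+1), Sig i, c (i+1)] [c i, Sig (i+1), Sig i]"
  using sb_r6[of i n] eqv.sym[OF sb_br[of i n]] by (elim disjE) simp_all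
lemma sc: "kind c \<Longrightarrow> 1\<le>i \<Longrightarrow> i<n \<Longrightarrow> eqv (sb_rels n) [c i, Sig i] [Sig i, c i]"
  by (elim disjE) (simp_all add: sb_xs eqv.refl)
lemma sci: "kind c \<Longrightarrow> 1\<le>i \<Longrightarrow> i<n \<Longrightarrow> eqv (sb_rels n) [c i, SigInv i] [SigInv i, c i]"
proof -
  assume a: "kind c" "1\<le>i" "i<n"
  have "eqv (sb_rels n) ([c i]@[Sig i]) ([Sig i]@[c i])" using sc[OF a] by simp
  from inv_conj[OF this, of "[SigInv i]" "[SigInv i]"] show ?thesis using sb_i1[OF a(2,3)] sb_i2[OF a(2,3)] by simp
qed

definition Dw :: "nat \<Rightarrow> nat \<Rightarrow> sbgen list" where "Dw t s = map Sig (rev [Suc s..<t])"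
definition Di :: "nat \<Rightarrow> nat \<Rightarrow> sbgen list" where "Di t s = map SigInv [Suc s..<t]"
definition Ew :: "nat \<Rightarrow> nat \<Rightarrow> sbgen list" where "Ew r m = map Sig (rev [r..<m])"
definition Ei :: "nat \<Rightarrow> nat \<Rightarrow> sbgen list" where "Ei r m = map SigInv [r..<m]"

lemma cw: "conj_word t s c = Dw t s @ [c] @ Di t s"
  by (simp add: conj_word_def Dw_def Di_def)

lemma D_inv: "t \<le> n \<Longrightarrow> eqv (sb_rels n) (Dw t s @ Di t s) [] \<and> eqv (sb_rels n) (Di t s @ Dw t s) []"
  using inv_list[of "rev [Suc s..<t]" n] by (simp add: Dw_def Di_def)

lemma E_inv: "1 \<le> r \<Longrightarrow> m < n \<Longrightarrow> eqv (sb_rels n) (Ew r m @ Ei r m) [] \<and> eqv (sb_rels n) (Ei r m @ Ew r m) []"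
  using inv_list[of "rev [r..<m]" n] by (simp add: Ew_def Ei_def)

lemma cw_step: "s < t \<Longrightarrow> conj_word (Suc t) s c = [Sig t] @ conj_word t s c @ [SigInv t]"
  by (simp add: conj_word_def)

lemma upt_split3: "r < s \<Longrightarrow> s < t \<Longrightarrow> [Suc r..<t] = [Suc r..<s] @ [s] @ [Suc s..<t]"
proof -
  assume a: "r < s" "s < t"
  have "[Suc r..<t] = [Suc r..<s] @ [s..<t]" using upt_add_eq_append[of "Suc r" s "t - s"] a by simp
  then show ?thesis using upt_conv_Cons[OF a(2)] by simp
qed

lemma D_split: "r < s \<Longrightarrow> s < t \<Longrightarrow> Dw t r = Dw t s @ [Sig s] @ Dw s r"
  by (simp add: Dw_def upt_split3)
lemma Di_split: "r < s \<Longrightarrow> s < t \<Longrightarrow> Di t r = Di s r @ [SigInv s] @ Di t s"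
  by (simp add: Di_def upt_split3)

lemma cw_split: "r < s \<Longrightarrow> s < t \<Longrightarrow> conj_word t r c = Dw t s @ [Sig s] @ conj_word s r c @ [SigInv s] @ Di t s"
  by (simp add: cw D_split Di_split)




lemma stp: "eqv R x y \<Longrightarrow> eqv R (u@x@v) (u@y@v)"
  using eqv_sub by blast

lemma idx_kind: "kind c \<Longrightarrow> idx (c k) = k" by auto

lemma lc2': "kind c \<Longrightarrow> 1\<le>i \<Longrightarrow> i+1<n \<Longrightarrow> eqv (sb_rels n) [Sig (i+1), c i, SigInv (i+1)] [SigInv i, c (i+1), Sig i]"
proof -
  assume a: "kind c" "1\<le>i" "i+1<n"
  have "eqv (sb_rels n) ([Sig i]@[Sig (i+1), c i]) [c (i+1), Sig i, Sig (i+1)]" using lc2[OF a] by simp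
  from cancel_l[OF _ this, of "[SigInv i]"]
  have "eqv (sb_rels n) [Sig (i+1), c i] [SigInv i, c (i+1), Sig i, Sig (i+1)]" using sb_i2[of i n] a by simp
  then have "eqv (sb_rels n) ([Sig (i+1), c i]@[SigInv (i+1)]) ([SigInv i, c (i+1), Sig i]@[Sig (i+1), SigInv (i+1)]@[])"
    using eqv_app_r by fastforce
  also have "eqv (sb_rels n) ([SigInv i, c (i+1), Sig i]@[Sig (i+1), SigInv (i+1)]@[]) ([SigInv i, c (i+1), Sig i]@[]@[])"
    using a by (intro stp sb_i1) auto
  finally show ?thesis by simp
qed

lemma Dw_split_j: "Suc s \<le> j \<Longrightarrow> j+2 \<le> t \<Longrightarrow>
  Dw t s = map Sig (rev [j+2..<t]) @ [Sig (Suc j), Sig j] @ map Sig (rev [Suc s..<j])"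
proof -
  assume a: "Suc s \<le> j" "j+2 \<le> t"
  have "[Suc s..<t] = [Suc s..<j] @ [j..<t]" using upt_add_eq_append[of "Suc s" j "t - j"] a by simp
  moreover have "[j..<t] = j # Suc j # [j+2..<t]" using a upt_conv_Cons by simp
  ultimately show ?thesis by (simp add: Dw_def)
qed

lemma SL: assumes k: "kind c" and a: "Suc s \<le> j" "j+2 \<le> t" "t \<le> n"
  shows "eqv (sb_rels n) (Dw t s @ [c (Suc j)]) ([c j] @ Dw t s)"
proof -
  define L where "L = map Sig (rev [j+2..<t])"
  define Rr where "Rr = map Sig (rev [Suc s..<j])"
  have D: "Dw t s = L @ [Sig (Suc j), Sig j] @ Rr" using Dw_split_j[OF a(1,2)] by (simp add: L_def Rr_def)
  have 1: "eqv (sb_rels n) (Rr @ [c (Suc j)]) ([c (Suc j)] @ Rr)"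
    using a k by (intro far_word) (auto simp: Rr_def okl_def far_def)
  have 2: "eqv (sb_rels n) (L @ [c j]) ([c j] @ L)"
    using a k by (intro far_word) (auto simp: L_def okl_def far_def)
  have "eqv (sb_rels n) (Dw t s @ [c (Suc j)]) ((L @ [Sig (Suc j), Sig j]) @ (Rr @ [c (Suc j)]) @ [])"
    by (simp add: D eqv.refl)
  also have "eqv (sb_rels n) ((L @ [Sig (Suc j), Sig j]) @ (Rr @ [c (Suc j)]) @ []) ((L @ [Sig (Suc j), Sig j]) @ ([c (Suc j)] @ Rr) @ [])"
    by (rule stp[OF 1])
  also have "eqv (sb_rels n) ((L @ [Sig (Suc j), Sig j]) @ ([c (Suc j)] @ Rr) @ []) (L @ [Sig (j+1), Sig j, c (j+1)] @ Rr)"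
    by (simp add: eqv.refl)
  also have "eqv (sb_rels n) (L @ [Sig (j+1), Sig j, c (j+1)] @ Rr) (L @ [c j, Sig (j+1), Sig j] @ Rr)"
    using a k by (intro stp lc3) auto
  also have "eqv (sb_rels n) (L @ [c j, Sig (j+1), Sig j] @ Rr) ([] @ (L @ [c j]) @ [Sig (j+1), Sig j] @ Rr)"
    by (simp add: eqv.refl)
  also have "eqv (sb_rels n) ([] @ (L @ [c j]) @ [Sig (j+1), Sig j] @ Rr) ([] @ ([c j] @ L) @ [Sig (j+1), Sig j] @ Rr)"
    by (rule stp[OF 2])
  also have "eqv (sb_rels n) ([] @ ([c j] @ L) @ [Sig (j+1), Sig j] @ Rr) ([c j] @ Dw t s)"
    by (simp add: D eqv.refl)
  finally show ?thesis .
qed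

lemma SLi: assumes a: "Suc s \<le> j" "j+2 \<le> t" "t \<le> n"
  shows "eqv (sb_rels n) (Dw t s @ [SigInv (Suc j)]) ([SigInv j] @ Dw t s)"
  using inv_conj[OF SL[of Sig, OF _ a], of "[SigInv (Suc j)]" "[SigInv j]"] sb_i1[of "Suc j" n] sb_i2[of j n] a
  by simp

fun sh :: "sbgen \<Rightarrow> sbgen" where "sh (Sig i) = Sig (Suc i)" | "sh (SigInv i) = SigInv (Suc i)" | "sh (X i) = X (Suc i)"

lemma SW: "t \<le> n \<Longrightarrow> \<forall>e\<in>set w. Suc s \<le> idx e \<and> idx e + 2 \<le> t \<Longrightarrow>
  eqv (sb_rels n) (Dw t s @ map sh w) (w @ Dw t s)"
proof (induction w)
  case Nil then show ?case by (simp add: eqv.refl)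
next
  case (Cons e w)
  have 1: "eqv (sb_rels n) (Dw t s @ [sh e]) ([e] @ Dw t s)"
    using Cons.prems SL[of Sig s _ t n] SL[of X s _ t n] SLi[of s _ t n] by (cases e) auto
  have "eqv (sb_rels n) (Dw t s @ map sh (e # w)) ([] @ (Dw t s @ [sh e]) @ map sh w)" by (simp add: eqv.refl)
  also have "eqv (sb_rels n) ([] @ (Dw t s @ [sh e]) @ map sh w) ([] @ ([e] @ Dw t s) @ map sh w)" by (rule stp[OF 1])
  also have "eqv (sb_rels n) ([] @ ([e] @ Dw t s) @ map sh w) ([e] @ (Dw t s @ map sh w) @ [])" by (simp add: eqv.refl)
  also have "eqv (sb_rels n) ([e] @ (Dw t s @ map sh w) @ []) ([e] @ (w @ Dw t s) @ [])" using Cons by (intro stp) auto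
  finally show ?case by simp
qed

lemma map_sh1: "map sh (map Sig l) = map Sig (map Suc l)" by (induct l) auto
lemma map_sh2: "map sh (map SigInv l) = map SigInv (map Suc l)" by (induct l) auto

lemma sh_cw: "kind c \<Longrightarrow> map sh (conj_word r q (c q)) = conj_word (Suc r) (Suc q) (c (Suc q))"
proof -
  assume k: "kind c"
  have "map sh (conj_word r q (c q)) = map Sig (rev (map Suc [Suc q..<r])) @ [sh (c q)] @ map SigInv (map Suc [Suc q..<r])"
    unfolding conj_word_def map_append map_sh1 map_sh2 rev_map by simp
  also have "\<dots> = conj_word (Suc r) (Suc q) (c (Suc q))"
    unfolding conj_word_def map_Suc_upt using k by auto
  finally show ?thesis .
qed




definition inr :: "nat \<Rightarrow> nat \<Rightarrow> sbgen list \<Rightarrow> bool" where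
  "inr a b w \<longleftrightarrow> (\<forall>e\<in>set w. a \<le> idx e \<and> idx e < b)"

lemma inr_app[simp]: "inr a b (u@v) \<longleftrightarrow> inr a b u \<and> inr a b v" by (auto simp: inr_def)
lemma inr_Nil[simp]: "inr a b []" by (auto simp: inr_def)
lemma inr_single[simp]: "inr a b [e] \<longleftrightarrow> a \<le> idx e \<and> idx e < b" by (auto simp: inr_def)
lemma inr_Cons[simp]: "inr a b (e#w) \<longleftrightarrow> a \<le> idx e \<and> idx e < b \<and> inr a b w" by (auto simp: inr_def)
lemma inr_mono: "inr a b w \<Longrightarrow> a' \<le> a \<Longrightarrow> b \<le> b' \<Longrightarrow> inr a' b' w" by (force simp: inr_def)
lemma inr_Dw[simp]: "inr (Suc s) t (Dw t s)" by (auto simp: inr_def Dw_def)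
lemma inr_Di[simp]: "inr (Suc s) t (Di t s)" by (auto simp: inr_def Di_def)
lemma inr_Ew[simp]: "inr r m (Ew r m)" by (auto simp: inr_def Ew_def)
lemma inr_Ei[simp]: "inr r m (Ei r m)" by (auto simp: inr_def Ei_def)
lemma inr_cw: "s < t \<Longrightarrow> idx e0 = s \<Longrightarrow> inr s t (conj_word t s e0)"
  by (auto simp: inr_def conj_word_def)

lemma far_range: "inr a b u \<Longrightarrow> inr c d v \<Longrightarrow> b < c \<or> d < a \<Longrightarrow> 1 \<le> a \<Longrightarrow> 1 \<le> c \<Longrightarrow> b \<le> n \<Longrightarrow> d \<le> n
  \<Longrightarrow> eqv (sb_rels n) (u@v) (v@u)"
proof (rule far_word)
  assume h: "inr a b u" "inr c d v" "b < c \<or> d < a" "1 \<le> a" "1 \<le> c" "b \<le> n" "d \<le> n"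
  show "\<forall>e\<in>set u. okl n e" using h by (force simp: inr_def okl_def)
  show "\<forall>e\<in>set v. okl n e" using h by (force simp: inr_def okl_def)
  show "\<forall>e\<in>set u. \<forall>f\<in>set v. far e f"
  proof (intro ballI)
    fix e f assume "e\<in>set u" "f\<in>set v"
    with h have "a \<le> idx e" "idx e < b" "c \<le> idx f" "idx f < d" by (auto simp: inr_def)
    then show "far e f" using h(3) unfolding far_def by arith
  qed
qed

lemma RF: assumes k: "kind c" and a: "1 \<le> r" "r \<le> m" "m < n"
  shows "eqv (sb_rels n) (conj_word (Suc m) r (c r)) (Ei r m @ [c m] @ Ew r m)"
  using a(2,3)
proof (induction m rule: dec_induct)
  case base then show ?case by (simp add: conj_word_def Ei_def Ew_def eqv.refl)
next
  case (step k)
  note st = step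
  have m1: "1 \<le> k" using a step by simp
  have "eqv (sb_rels n) (conj_word (Suc (Suc k)) r (c r)) ([Sig (Suc k)] @ conj_word (Suc k) r (c r) @ [SigInv (Suc k)])"
    using step by (simp add: cw_step eqv.refl)
  also have "eqv (sb_rels n) ([Sig (Suc k)] @ conj_word (Suc k) r (c r) @ [SigInv (Suc k)]) ([Sig (Suc k)] @ (Ei r k @ [c k] @ Ew r k) @ [SigInv (Suc k)])"
    using step by (intro stp) auto
  also have "eqv (sb_rels n) ([Sig (Suc k)] @ (Ei r k @ [c k] @ Ew r k) @ [SigInv (Suc k)]) ([] @ (Ei r k @ [Sig (Suc k)]) @ ([c k] @ Ew r k @ [SigInv (Suc k)]))"
  proof -
    have "eqv (sb_rels n) ([Sig (Suc k)] @ Ei r k) (Ei r k @ [Sig (Suc k)])"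
      using step a by (intro far_range[of "Suc k" "Suc (Suc k)" "[Sig (Suc k)]" r k "Ei r k" n]) auto
    from stp[OF this, of "[]" "[c k] @ Ew r k @ [SigInv (Suc k)]"] show ?thesis by simp
  qed
  also have "eqv (sb_rels n) ([] @ (Ei r k @ [Sig (Suc k)]) @ ([c k] @ Ew r k @ [SigInv (Suc k)])) ((Ei r k @ [Sig (Suc k), c k]) @ ([SigInv (Suc k)] @ Ew r k) @ [])"
  proof -
    have "eqv (sb_rels n) (Ew r k @ [SigInv (Suc k)]) ([SigInv (Suc k)] @ Ew r k)"
      using step a by (intro far_range[of r k "Ew r k" "Suc k" "Suc (Suc k)" "[SigInv (Suc k)]" n]) auto
    from stp[OF this, of "Ei r k @ [Sig (Suc k), c k]" "[]"] show ?thesis by simp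
  qed
  also have "eqv (sb_rels n) ((Ei r k @ [Sig (Suc k), c k]) @ ([SigInv (Suc k)] @ Ew r k) @ []) (Ei r k @ [SigInv k, c (k+1), Sig k] @ Ew r k)"
    using stp[OF lc2'[OF k m1, of n], of "Ei r k" "Ew r k"] step by simp
  also have "Ei r k @ [SigInv k, c (k+1), Sig k] @ Ew r k = Ei r (Suc k) @ [c (Suc k)] @ Ew r (Suc k)"
    using step by (simp add: Ei_def Ew_def)
  finally show ?case .
qed




lemma join: "eqv R a m \<Longrightarrow> eqv R b m \<Longrightarrow> eqv R a b"
  using eqv.sym eqv.trans by metis

lemma stp': "eqv R x y \<Longrightarrow> P = u@x@v \<Longrightarrow> Q = u@y@v \<Longrightarrow> eqv R P Q"
  using eqv_sub by blast

lemma K2l: "kind c \<Longrightarrow> 1\<le>m \<Longrightarrow> m+1<n \<Longrightarrow> eqv (sb_rels n) [Sig m, Sig (m+1), c m, SigInv (m+1)] [c (m+1), Sig m]"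
proof -
  assume a: "kind c" "1\<le>m" "m+1<n"
  have "eqv (sb_rels n) ([Sig m, Sig (m+1), c m] @ [SigInv (m+1)]) ([c (m+1), Sig m, Sig (m+1)] @ [SigInv (m+1)])"
    using eqv_app_r[OF lc2[OF a]] .
  also have "eqv (sb_rels n) ([c (m+1), Sig m, Sig (m+1)] @ [SigInv (m+1)]) ([c (m+1), Sig m] @ [] @ [])"
    using stp[OF sb_i1[of "m+1" n], of "[c (m+1), Sig m]" "[]"] a by simp
  finally show ?thesis by simp
qed

lemma K3l: "kind c \<Longrightarrow> 1\<le>m \<Longrightarrow> m+1<n \<Longrightarrow> eqv (sb_rels n) [Sig (m+1), Sig m, SigInv (m+1), c (m+1)] [c m, Sig (m+1), Sig m, SigInv (m+1)]"
proof -
  assume a: "kind c" "1\<le>m" "m+1<n"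
  have "eqv (sb_rels n) ([Sig (m+1), Sig m] @ [SigInv (m+1), c (m+1)] @ []) ([Sig (m+1), Sig m] @ [c (m+1), SigInv (m+1)] @ [])"
    using a by (intro stp eqv.sym[OF sci]) auto
  also have "eqv (sb_rels n) ([Sig (m+1), Sig m] @ [c (m+1), SigInv (m+1)] @ []) ([c m, Sig (m+1), Sig m] @ [SigInv (m+1)])"
    using eqv_app_r[OF lc3[OF a], of "[SigInv (m+1)]"] by simp
  finally show ?thesis by simp
qed

lemma K2: assumes k: "kind c" and a: "1\<le>r" "r\<le>m" "Suc m < n"
  shows "eqv (sb_rels n) (conj_word (Suc m) r (Sig r) @ [Sig (Suc m)] @ conj_word (Suc m) r (c r) @ [SigInv (Suc m)])
                         ([c (Suc m)] @ conj_word (Suc m) r (Sig r))"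
proof -
  have m1: "1 \<le> m" using a by simp
  have RS: "eqv (sb_rels n) (conj_word (Suc m) r (Sig r)) (Ei r m @ [Sig m] @ Ew r m)" using RF[of Sig r m n] a by simp
  have RC: "eqv (sb_rels n) (conj_word (Suc m) r (c r)) (Ei r m @ [c m] @ Ew r m)" using RF[OF k, of r m n] a by simp
  have f1: "eqv (sb_rels n) (Ew r m @ [Sig (Suc m)]) ([Sig (Suc m)] @ Ew r m)"
    using a by (intro far_range[of r m "Ew r m" "Suc m" "Suc (Suc m)" "[Sig (Suc m)]" n]) auto
  have f2: "eqv (sb_rels n) (Ew r m @ [SigInv (Suc m)]) ([SigInv (Suc m)] @ Ew r m)"
    using a by (intro far_range[of r m "Ew r m" "Suc m" "Suc (Suc m)" "[SigInv (Suc m)]" n]) auto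
  have f3: "eqv (sb_rels n) (Ei r m @ [c (Suc m)]) ([c (Suc m)] @ Ei r m)"
    using a k by (intro far_range[of r m "Ei r m" "Suc m" "Suc (Suc m)" "[c (Suc m)]" n]) auto
  have "eqv (sb_rels n) (conj_word (Suc m) r (Sig r) @ [Sig (Suc m)] @ conj_word (Suc m) r (c r) @ [SigInv (Suc m)])
      ((Ei r m @ [Sig m] @ Ew r m) @ [Sig (Suc m)] @ (Ei r m @ [c m] @ Ew r m) @ [SigInv (Suc m)])"
    by (intro eqv_cong RS RC eqv.refl)
  also have "\<dots> = (Ei r m @ [Sig m]) @ (Ew r m @ [Sig (Suc m)]) @ (Ei r m @ [c m] @ Ew r m @ [SigInv (Suc m)])" by simp
  also have "eqv (sb_rels n) \<dots> ((Ei r m @ [Sig m]) @ ([Sig (Suc m)] @ Ew r m) @ (Ei r m @ [c m] @ Ew r m @ [SigInv (Suc m)]))"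
    by (rule stp[OF f1])
  also have "\<dots> = (Ei r m @ [Sig m, Sig (Suc m)]) @ (Ew r m @ Ei r m) @ ([c m] @ Ew r m @ [SigInv (Suc m)])" by simp
  also have "eqv (sb_rels n) \<dots> ((Ei r m @ [Sig m, Sig (Suc m)]) @ [] @ ([c m] @ Ew r m @ [SigInv (Suc m)]))"
    using a by (intro stp conjunct1[OF E_inv]) auto
  also have "\<dots> = (Ei r m @ [Sig m, Sig (Suc m), c m]) @ (Ew r m @ [SigInv (Suc m)]) @ []" by simp
  also have "eqv (sb_rels n) \<dots> ((Ei r m @ [Sig m, Sig (Suc m), c m]) @ ([SigInv (Suc m)] @ Ew r m) @ [])"
    by (rule stp[OF f2])
  also have "\<dots> = Ei r m @ [Sig m, Sig (m+1), c m, SigInv (m+1)] @ Ew r m" by simp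
  also have "eqv (sb_rels n) \<dots> (Ei r m @ [c (m+1), Sig m] @ Ew r m)"
    using a by (intro stp K2l[OF k m1]) auto
  also have "\<dots> = [] @ (Ei r m @ [c (Suc m)]) @ ([Sig m] @ Ew r m)" by simp
  also have "eqv (sb_rels n) \<dots> ([] @ ([c (Suc m)] @ Ei r m) @ ([Sig m] @ Ew r m))"
    by (rule stp[OF f3])
  also have "\<dots> = [c (Suc m)] @ (Ei r m @ [Sig m] @ Ew r m) @ []" by simp
  also have "eqv (sb_rels n) \<dots> ([c (Suc m)] @ conj_word (Suc m) r (Sig r) @ [])"
    by (rule stp[OF eqv.sym[OF RS]])
  finally show ?thesis by simp
qed

lemma K3: assumes k: "kind c" and a: "1\<le>r" "r\<le>m" "Suc m < n"
  shows "eqv (sb_rels n) ([Sig (Suc m)] @ conj_word (Suc m) r (Sig r) @ [SigInv (Suc m), c (Suc m)])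
                         (conj_word (Suc m) r (c r) @ [Sig (Suc m)] @ conj_word (Suc m) r (Sig r) @ [SigInv (Suc m)])"
proof -
  have m1: "1 \<le> m" using a by simp
  have RS: "eqv (sb_rels n) (conj_word (Suc m) r (Sig r)) (Ei r m @ [Sig m] @ Ew r m)" using RF[of Sig r m n] a by simp
  have RC: "eqv (sb_rels n) (conj_word (Suc m) r (c r)) (Ei r m @ [c m] @ Ew r m)" using RF[OF k, of r m n] a by simp
  have f1: "eqv (sb_rels n) (Ew r m @ [Sig (Suc m)]) ([Sig (Suc m)] @ Ew r m)"
    using a by (intro far_range[of r m "Ew r m" "Suc m" "Suc (Suc m)" "[Sig (Suc m)]" n]) auto
  have f2: "eqv (sb_rels n) (Ew r m @ [SigInv (Suc m)]) ([SigInv (Suc m)] @ Ew r m)"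
    using a by (intro far_range[of r m "Ew r m" "Suc m" "Suc (Suc m)" "[SigInv (Suc m)]" n]) auto
  have f3: "eqv (sb_rels n) ([Sig (Suc m)] @ Ei r m) (Ei r m @ [Sig (Suc m)])"
    using a by (intro far_range[of "Suc m" "Suc (Suc m)" "[Sig (Suc m)]" r m "Ei r m" n]) auto
  have f4: "eqv (sb_rels n) (Ew r m @ [SigInv (Suc m), c (Suc m)]) ([SigInv (Suc m), c (Suc m)] @ Ew r m)"
    using a k by (intro far_range[of r m "Ew r m" "Suc m" "Suc (Suc m)" "[SigInv (Suc m), c (Suc m)]" n]) auto
  have "eqv (sb_rels n) ([Sig (Suc m)] @ conj_word (Suc m) r (Sig r) @ [SigInv (Suc m), c (Suc m)])
        ([Sig (Suc m)] @ (Ei r m @ [Sig m] @ Ew r m) @ [SigInv (Suc m), c (Suc m)])"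
    by (intro eqv_cong RS eqv.refl)
  also have "\<dots> = [] @ ([Sig (Suc m)] @ Ei r m) @ ([Sig m] @ Ew r m @ [SigInv (Suc m), c (Suc m)])" by simp
  also have "eqv (sb_rels n) \<dots> ([] @ (Ei r m @ [Sig (Suc m)]) @ ([Sig m] @ Ew r m @ [SigInv (Suc m), c (Suc m)]))"
    by (rule stp[OF f3])
  also have "\<dots> = (Ei r m @ [Sig (Suc m), Sig m]) @ (Ew r m @ [SigInv (Suc m), c (Suc m)]) @ []" by simp
  also have "eqv (sb_rels n) \<dots> ((Ei r m @ [Sig (Suc m), Sig m]) @ ([SigInv (Suc m), c (Suc m)] @ Ew r m) @ [])"
    by (rule stp[OF f4])
  also have "\<dots> = Ei r m @ [Sig (m+1), Sig m, SigInv (m+1), c (m+1)] @ Ew r m" by simp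
  also have "eqv (sb_rels n) \<dots> (Ei r m @ [c m, Sig (m+1), Sig m, SigInv (m+1)] @ Ew r m)"
    using a by (intro stp K3l[OF k m1]) auto
  finally have L: "eqv (sb_rels n) ([Sig (Suc m)] @ conj_word (Suc m) r (Sig r) @ [SigInv (Suc m), c (Suc m)])
     (Ei r m @ [c m, Sig (m+1), Sig m, SigInv (m+1)] @ Ew r m)" .
  have "eqv (sb_rels n) (conj_word (Suc m) r (c r) @ [Sig (Suc m)] @ conj_word (Suc m) r (Sig r) @ [SigInv (Suc m)])
      ((Ei r m @ [c m] @ Ew r m) @ [Sig (Suc m)] @ (Ei r m @ [Sig m] @ Ew r m) @ [SigInv (Suc m)])"
    by (intro eqv_cong RS RC eqv.refl)
  also have "\<dots> = (Ei r m @ [c m]) @ (Ew r m @ [Sig (Suc m)]) @ (Ei r m @ [Sig m] @ Ew r m @ [SigInv (Suc m)])" by simp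
  also have "eqv (sb_rels n) \<dots> ((Ei r m @ [c m]) @ ([Sig (Suc m)] @ Ew r m) @ (Ei r m @ [Sig m] @ Ew r m @ [SigInv (Suc m)]))"
    by (rule stp[OF f1])
  also have "\<dots> = (Ei r m @ [c m, Sig (Suc m)]) @ (Ew r m @ Ei r m) @ ([Sig m] @ Ew r m @ [SigInv (Suc m)])" by simp
  also have "eqv (sb_rels n) \<dots> ((Ei r m @ [c m, Sig (Suc m)]) @ [] @ ([Sig m] @ Ew r m @ [SigInv (Suc m)]))"
    using a by (intro stp conjunct1[OF E_inv]) auto
  also have "\<dots> = (Ei r m @ [c m, Sig (Suc m), Sig m]) @ (Ew r m @ [SigInv (Suc m)]) @ []" by simp
  also have "eqv (sb_rels n) \<dots> ((Ei r m @ [c m, Sig (Suc m), Sig m]) @ ([SigInv (Suc m)] @ Ew r m) @ [])"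
    by (rule stp[OF f2])
  finally have R: "eqv (sb_rels n) (conj_word (Suc m) r (c r) @ [Sig (Suc m)] @ conj_word (Suc m) r (Sig r) @ [SigInv (Suc m)])
     (Ei r m @ [c m, Sig (m+1), Sig m, SigInv (m+1)] @ Ew r m)" by simp
  show ?thesis using join[OF L R] .
qed




lemma inr_cwk: "kind c \<Longrightarrow> s < t \<Longrightarrow> inr s t (conj_word t s (c s))"
  by (rule inr_cw) auto

lemma P1: assumes k: "kind c" and a: "1\<le>r" "r<s" "s<t" "t\<le>n"
  shows "eqv (sb_rels n) (conj_word t s (Sig s) @ conj_word s r (c r)) (conj_word t r (c r) @ conj_word t s (Sig s))"
proof -
  have fI: "eqv (sb_rels n) (Di t s @ conj_word s r (c r)) (conj_word s r (c r) @ Di t s)"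
    using a k by (intro far_range[of "Suc s" t "Di t s" r s "conj_word s r (c r)" n] inr_cwk) auto
  have "conj_word t s (Sig s) @ conj_word s r (c r) = (Dw t s @ [Sig s]) @ (Di t s @ conj_word s r (c r)) @ []"
    by (simp add: cw)
  also have "eqv (sb_rels n) \<dots> ((Dw t s @ [Sig s]) @ (conj_word s r (c r) @ Di t s) @ [])"
    by (rule stp[OF fI])
  finally have L: "eqv (sb_rels n) (conj_word t s (Sig s) @ conj_word s r (c r)) ((Dw t s @ [Sig s] @ conj_word s r (c r)) @ [] @ Di t s)" by simp
  have "conj_word t r (c r) @ conj_word t s (Sig s) = (Dw t s @ [Sig s] @ conj_word s r (c r) @ [SigInv s]) @ (Di t s @ Dw t s) @ ([Sig s] @ Di t s)"
    using a by (simp add: cw D_split[of r s t] Di_split[of r s t])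
  also have "eqv (sb_rels n) \<dots> ((Dw t s @ [Sig s] @ conj_word s r (c r) @ [SigInv s]) @ [] @ ([Sig s] @ Di t s))"
    using a by (intro stp conjunct2[OF D_inv]) auto
  also have "\<dots> = (Dw t s @ [Sig s] @ conj_word s r (c r)) @ [SigInv s, Sig s] @ Di t s" by simp
  also have "eqv (sb_rels n) \<dots> ((Dw t s @ [Sig s] @ conj_word s r (c r)) @ [] @ Di t s)"
    using a by (intro stp sb_i2) auto
  finally have R: "eqv (sb_rels n) (conj_word t r (c r) @ conj_word t s (Sig s)) ((Dw t s @ [Sig s] @ conj_word s r (c r)) @ [] @ Di t s)" .
  show ?thesis using join[OF L R] .
qed

lemma P2: assumes k: "kind c" and a: "1\<le>r" "r<s" "s<t" "t\<le>n"
  shows "eqv (sb_rels n) (conj_word s r (Sig r) @ conj_word t r (c r)) (conj_word t s (c s) @ conj_word s r (Sig r))"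
proof -
  obtain m where m: "s = Suc m" using a by (cases s) auto
  have f1: "eqv (sb_rels n) (conj_word s r (Sig r) @ Dw t s) (Dw t s @ conj_word s r (Sig r))"
    using a by (intro far_range[of r s "conj_word s r (Sig r)" "Suc s" t "Dw t s" n] inr_cwk) auto
  have f2: "eqv (sb_rels n) (Di t s @ conj_word s r (Sig r)) (conj_word s r (Sig r) @ Di t s)"
    using a by (intro far_range[of "Suc s" t "Di t s" r s "conj_word s r (Sig r)" n] inr_cwk) auto
  have K: "eqv (sb_rels n) (conj_word s r (Sig r) @ [Sig s] @ conj_word s r (c r) @ [SigInv s]) ([c s] @ conj_word s r (Sig r))"
    using K2[OF k, of r m n] a m by simp
  have "conj_word s r (Sig r) @ conj_word t r (c r) = [] @ (conj_word s r (Sig r) @ Dw t s) @ ([Sig s] @ conj_word s r (c r) @ [SigInv s] @ Di t s)"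
    using a by (simp add: cw D_split[of r s t] Di_split[of r s t])
  also have "eqv (sb_rels n) \<dots> ([] @ (Dw t s @ conj_word s r (Sig r)) @ ([Sig s] @ conj_word s r (c r) @ [SigInv s] @ Di t s))"
    by (rule stp[OF f1])
  also have "\<dots> = Dw t s @ (conj_word s r (Sig r) @ [Sig s] @ conj_word s r (c r) @ [SigInv s]) @ Di t s" by simp
  also have "eqv (sb_rels n) \<dots> (Dw t s @ ([c s] @ conj_word s r (Sig r)) @ Di t s)"
    by (rule stp[OF K])
  finally have L: "eqv (sb_rels n) (conj_word s r (Sig r) @ conj_word t r (c r)) ((Dw t s @ [c s]) @ (conj_word s r (Sig r) @ Di t s) @ [])" by simp
  have "conj_word t s (c s) @ conj_word s r (Sig r) = (Dw t s @ [c s]) @ (Di t s @ conj_word s r (Sig r)) @ []"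
    by (simp add: cw)
  also have "eqv (sb_rels n) \<dots> ((Dw t s @ [c s]) @ (conj_word s r (Sig r) @ Di t s) @ [])"
    by (rule stp[OF f2])
  finally have R: "eqv (sb_rels n) (conj_word t s (c s) @ conj_word s r (Sig r)) ((Dw t s @ [c s]) @ (conj_word s r (Sig r) @ Di t s) @ [])" .
  show ?thesis using join[OF L R] .
qed

lemma P3: assumes k: "kind c" and a: "1\<le>r" "r<s" "s<t" "t\<le>n"
  shows "eqv (sb_rels n) (conj_word t r (Sig r) @ conj_word t s (c s)) (conj_word s r (c r) @ conj_word t r (Sig r))"
proof -
  obtain m where m: "s = Suc m" using a by (cases s) auto
  have f1: "eqv (sb_rels n) (conj_word s r (c r) @ Dw t s) (Dw t s @ conj_word s r (c r))"
    using a k by (intro far_range[of r s "conj_word s r (c r)" "Suc s" t "Dw t s" n] inr_cwk) auto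
  have K: "eqv (sb_rels n) ([Sig s] @ conj_word s r (Sig r) @ [SigInv s, c s]) (conj_word s r (c r) @ [Sig s] @ conj_word s r (Sig r) @ [SigInv s])"
    using K3[OF k, of r m n] a m by simp
  have "conj_word t r (Sig r) @ conj_word t s (c s) = (Dw t s @ [Sig s] @ conj_word s r (Sig r) @ [SigInv s]) @ (Di t s @ Dw t s) @ ([c s] @ Di t s)"
    using a by (simp add: cw D_split[of r s t] Di_split[of r s t])
  also have "eqv (sb_rels n) \<dots> ((Dw t s @ [Sig s] @ conj_word s r (Sig r) @ [SigInv s]) @ [] @ ([c s] @ Di t s))"
    using a by (intro stp conjunct2[OF D_inv]) auto
  also have "\<dots> = Dw t s @ ([Sig s] @ conj_word s r (Sig r) @ [SigInv s, c s]) @ Di t s" by simp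
  also have "eqv (sb_rels n) \<dots> (Dw t s @ (conj_word s r (c r) @ [Sig s] @ conj_word s r (Sig r) @ [SigInv s]) @ Di t s)"
    by (rule stp[OF K])
  finally have L: "eqv (sb_rels n) (conj_word t r (Sig r) @ conj_word t s (c s)) ([] @ (Dw t s @ conj_word s r (c r)) @ ([Sig s] @ conj_word s r (Sig r) @ [SigInv s] @ Di t s))" by simp
  have "conj_word s r (c r) @ conj_word t r (Sig r) = [] @ (conj_word s r (c r) @ Dw t s) @ ([Sig s] @ conj_word s r (Sig r) @ [SigInv s] @ Di t s)"
    using a by (simp add: cw D_split[of r s t] Di_split[of r s t])
  also have "eqv (sb_rels n) \<dots> ([] @ (Dw t s @ conj_word s r (c r)) @ ([Sig s] @ conj_word s r (Sig r) @ [SigInv s] @ Di t s))"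
    by (rule stp[OF f1])
  finally have R: "eqv (sb_rels n) (conj_word s r (c r) @ conj_word t r (Sig r)) ([] @ (Dw t s @ conj_word s r (c r)) @ ([Sig s] @ conj_word s r (Sig r) @ [SigInv s] @ Di t s))" .
  show ?thesis using join[OF L R] .
qed

lemma P4n: assumes k: "kind c" "kind d" and a: "1\<le>s" "s<q" "q<r" "r<t" "t\<le>n"
  shows "eqv (sb_rels n) (conj_word t s (c s) @ conj_word r q (d q)) (conj_word r q (d q) @ conj_word t s (c s))"
proof -
  let ?H = "conj_word r q (d q)" and ?H' = "conj_word (Suc r) (Suc q) (d (Suc q))"
  have iH: "inr q r ?H" using k a by (intro inr_cwk) auto
  have SWH: "eqv (sb_rels n) (Dw t s @ ?H') (?H @ Dw t s)"
  proof -
    have "\<forall>e\<in>set ?H. Suc s \<le> idx e \<and> idx e + 2 \<le> t" using iH a unfolding inr_def by fastforce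
    then have "eqv (sb_rels n) (Dw t s @ map sh ?H) (?H @ Dw t s)" using SW[OF a(5)] by blast
    then show ?thesis using sh_cw[OF k(2)] by simp
  qed
  have "Di t s @ ?H = (Di t s @ ?H) @ [] @ []" by simp
  also have "eqv (sb_rels n) \<dots> ((Di t s @ ?H) @ (Dw t s @ Di t s) @ [])"
    using a by (intro stp eqv.sym[OF conjunct1[OF D_inv]]) auto
  also have "\<dots> = Di t s @ (?H @ Dw t s) @ Di t s" by simp
  also have "eqv (sb_rels n) \<dots> (Di t s @ (Dw t s @ ?H') @ Di t s)"
    by (rule stp[OF eqv.sym[OF SWH]])
  also have "\<dots> = [] @ (Di t s @ Dw t s) @ (?H' @ Di t s)" by simp
  also have "eqv (sb_rels n) \<dots> ([] @ [] @ (?H' @ Di t s))"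
    using a by (intro stp conjunct2[OF D_inv]) auto
  finally have IH: "eqv (sb_rels n) (Di t s @ ?H) (?H' @ Di t s)" by simp
  have f: "eqv (sb_rels n) ([c s] @ ?H') (?H' @ [c s])"
    using a k by (intro far_range[of s "Suc s" "[c s]" "Suc q" "Suc r" ?H' n] inr_cwk) auto
  have "conj_word t s (c s) @ ?H = (Dw t s @ [c s]) @ (Di t s @ ?H) @ []" by (simp add: cw)
  also have "eqv (sb_rels n) \<dots> ((Dw t s @ [c s]) @ (?H' @ Di t s) @ [])" by (rule stp[OF IH])
  also have "\<dots> = Dw t s @ ([c s] @ ?H') @ Di t s" by simp
  also have "eqv (sb_rels n) \<dots> (Dw t s @ (?H' @ [c s]) @ Di t s)" by (rule stp[OF f])
  also have "\<dots> = [] @ (Dw t s @ ?H') @ ([c s] @ Di t s)" by simp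
  also have "eqv (sb_rels n) \<dots> ([] @ (?H @ Dw t s) @ ([c s] @ Di t s))" by (rule stp[OF SWH])
  finally show ?thesis by (simp add: cw)
qed

lemma P4d: assumes k: "kind c" "kind d" and a: "1\<le>q" "q<r" "r<s" "s<t" "t\<le>n"
  shows "eqv (sb_rels n) (conj_word t s (c s) @ conj_word r q (d q)) (conj_word r q (d q) @ conj_word t s (c s))"
  using a k by (intro far_range[of s t "conj_word t s (c s)" q r "conj_word r q (d q)" n] inr_cwk) auto

lemma PD: "t \<le> n \<Longrightarrow> eqv (sb_rels n) (conj_word t s e @ conj_word t s f) (Dw t s @ [e,f] @ Di t s)"
proof -
  assume a: "t \<le> n"
  have "conj_word t s e @ conj_word t s f = (Dw t s @ [e]) @ (Di t s @ Dw t s) @ ([f] @ Di t s)" by (simp add: cw)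
  also have "eqv (sb_rels n) \<dots> ((Dw t s @ [e]) @ [] @ ([f] @ Di t s))"
    using a by (intro stp conjunct2[OF D_inv]) auto
  finally show ?thesis by simp
qed

lemma P5: "1 \<le> s \<Longrightarrow> s < t \<Longrightarrow> t \<le> n \<Longrightarrow>
  eqv (sb_rels n) (conj_word t s (Sig s) @ conj_word t s (X s)) (conj_word t s (X s) @ conj_word t s (Sig s))"
proof -
  assume a: "1 \<le> s" "s < t" "t \<le> n"
  have M: "eqv (sb_rels n) (Dw t s @ [Sig s, X s] @ Di t s) (Dw t s @ [X s, Sig s] @ Di t s)"
    using a by (intro stp sb_sx) auto
  show ?thesis using eqv.trans[OF PD[OF a(3)] eqv.trans[OF M eqv.sym[OF PD[OF a(3)]]]] by simp
qed

lemma P6: "1 \<le> s \<Longrightarrow> s < t \<Longrightarrow> t \<le> n \<Longrightarrow>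
  eqv (sb_rels n) (conj_word t s (Sig s) @ conj_word t s (SigInv s)) [] \<and>
  eqv (sb_rels n) (conj_word t s (SigInv s) @ conj_word t s (Sig s)) []"
proof -
  assume a: "1 \<le> s" "s < t" "t \<le> n"
  have 1: "eqv (sb_rels n) (Dw t s @ [Sig s, SigInv s] @ Di t s) (Dw t s @ [] @ Di t s)"
    using a by (intro stp sb_i1) auto
  have 2: "eqv (sb_rels n) (Dw t s @ [SigInv s, Sig s] @ Di t s) (Dw t s @ [] @ Di t s)"
    using a by (intro stp sb_i2) auto
  have 3: "eqv (sb_rels n) (Dw t s @ [] @ Di t s) []" using D_inv[OF a(3)] by simp
  show ?thesis using eqv.trans[OF PD[OF a(3)] eqv.trans[OF 1 3]] eqv.trans[OF PD[OF a(3)] eqv.trans[OF 2 3]] by blast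
qed

lemma sep_cases: "pr n t s \<Longrightarrow> pr n r q \<Longrightarrow> sep t s r q \<Longrightarrow> r < s \<or> t < q \<or> (s < q \<and> r < t) \<or> (q < s \<and> t < r)"
proof (rule ccontr)
  assume a: "pr n t s" "pr n r q" "sep t s r q" and b: "\<not> (r < s \<or> t < q \<or> (s < q \<and> r < t) \<or> (q < s \<and> t < r))"
  have "s = q \<or> s = r \<or> t = q \<or> t = r \<or> (s<q \<and> q<t \<and> t<r) \<or> (q<s \<and> s<r \<and> r<t)"
    using a(1,2) b unfolding pr_def by linarith
  then show False
  proof (elim disjE conjE)
    assume h: "s < q" "q < t" "t < r"
    have "(int t - int r) * (int t - int q) < 0" using h by (intro mult_neg_pos) auto
    then have "(int t - int r) * (int t - int q) * (int s - int r) > 0" using h by (intro mult_neg_neg) auto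
    then have "(int t - int r) * (int t - int q) * (int s - int r) * (int s - int q) < 0" using h by (intro mult_pos_neg) auto
    then show False using a(3) unfolding sep_def by simp
  next
    assume h: "q < s" "s < r" "r < t"
    have "(int t - int r) * (int t - int q) > 0" using h by (intro mult_pos_pos) auto
    then have m3: "(int t - int r) * (int t - int q) * (int s - int r) < 0" using h by (intro mult_pos_neg) auto
    have "(int t - int r) * (int t - int q) * (int s - int r) * (int s - int q) < 0" using mult_neg_pos[OF m3, of "int s - int q"] h by simp
    then show False using a(3) unfolding sep_def by simp
  qed (use a(3) in \<open>auto simp: sep_def\<close>)
qed

lemma P4: assumes k: "kind c" "kind d" and a: "pr n t s" "pr n r q" "sep t s r q"
  shows "eqv (sb_rels n) (conj_word t s (c s) @ conj_word r q (d q)) (conj_word r q (d q) @ conj_word t s (c s))"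
  using sep_cases[OF a] a
proof (elim disjE conjE)
  assume "r < s" then show ?thesis using a k by (intro P4d) (auto simp: pr_def)
next
  assume "t < q" then show ?thesis using a k by (intro eqv.sym[OF P4d]) (auto simp: pr_def)
next
  assume "s < q" "r < t" then show ?thesis using a k by (intro P4n) (auto simp: pr_def)
next
  assume "q < s" "t < r" then show ?thesis using a k by (intro eqv.sym[OF P4n]) (auto simp: pr_def)
qed




lemma phi_app: "phi (u@v) = phi u @ phi v" by (simp add: phi_def)

lemma phi_rel: assumes "(x,y) \<in> bk_rels n" shows "eqv (sb_rels n) (phi x) (phi y)"
  using assms unfolding bk_rels_def
proof (elim UnE)
  assume "(x, y) \<in> {([A t s, A r q], [A r q, A t s]) |t s r q. pr n t s \<and> pr n r q \<and> sep t s r q}"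
  then show ?thesis by (clarsimp simp: phi_def) (rule P4[of Sig Sig]; simp)
next
  assume "(x, y) \<in> {([A t s, A s r], [A t r, A t s]) |t s r. 1 \<le> r \<and> r < s \<and> s < t \<and> t \<le> n}"
  then show ?thesis by (clarsimp simp: phi_def) (rule P1[of Sig]; simp)
next
  assume "(x, y) \<in> {([A t r, A t s], [A s r, A t r]) |t s r. 1 \<le> r \<and> r < s \<and> s < t \<and> t \<le> n}"
  then show ?thesis by (clarsimp simp: phi_def) (rule P3[of Sig]; simp)
next
  assume "(x, y) \<in> {([A t s, Ainv t s], []) |t s. pr n t s}"
  then show ?thesis using P6 by (clarsimp simp: phi_def pr_def)
next
  assume "(x, y) \<in> {([Ainv t s, A t s], []) |t s. pr n t s}"
  then show ?thesis using P6 by (clarsimp simp: phi_def pr_def)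
next
  assume "(x, y) \<in> {([A t s, B r q], [B r q, A t s]) |t s r q. pr n t s \<and> pr n r q \<and> sep t s r q}"
  then show ?thesis by (clarsimp simp: phi_def) (rule P4[of Sig X]; simp)
next
  assume "(x, y) \<in> {([A t s, B t s], [B t s, A t s]) |t s. pr n t s}"
  then show ?thesis using P5 by (clarsimp simp: phi_def pr_def)
next
  assume "(x, y) \<in> {([A t s, B s r], [B t r, A t s]) |t s r. 1 \<le> r \<and> r < s \<and> s < t \<and> t \<le> n}"
  then show ?thesis by (clarsimp simp: phi_def) (rule P1[of X]; simp)
next
  assume "(x, y) \<in> {([A s r, B t r], [B t s, A s r]) |t s r. 1 \<le> r \<and> r < s \<and> s < t \<and> t \<le> n}"
  then show ?thesis by (clarsimp simp: phi_def) (rule P2[of X]; simp)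
next
  assume "(x, y) \<in> {([A t r, B t s], [B s r, A t r]) |t s r. 1 \<le> r \<and> r < s \<and> s < t \<and> t \<le> n}"
  then show ?thesis by (clarsimp simp: phi_def) (rule P3[of X]; simp)
next
  assume "(x, y) \<in> {([B t s, B r q], [B r q, B t s]) |t s r q. pr n t s \<and> pr n r q \<and> sep t s r q}"
  then show ?thesis by (clarsimp simp: phi_def) (rule P4[of X X]; simp)
qed

lemma phi_hom: "eqv (bk_rels n) u v \<Longrightarrow> eqv (sb_rels n) (phi u) (phi v)"
proof (induction rule: eqv.induct)
  case (refl w) then show ?case by (rule eqv.refl)
next
  case (sym w v) then show ?case using eqv.sym by blast
next
  case (trans u v w) then show ?case using eqv.trans by blast
next
  case (rel x y u v) then show ?case unfolding phi_app by (intro stp phi_rel)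
qed




fun ps :: "sbgen \<Rightarrow> bkgen" where
  "ps (Sig i) = A (Suc i) i" | "ps (SigInv i) = Ainv (Suc i) i" | "ps (X i) = B (Suc i) i"

lemma bk1: "pr n t s \<Longrightarrow> pr n r q \<Longrightarrow> sep t s r q \<Longrightarrow> eqv (bk_rels n) [A t s, A r q] [A r q, A t s]"
  by (rule rel0) (auto simp: bk_rels_def)
lemma bk2: "1 \<le> r \<Longrightarrow> r < s \<Longrightarrow> s < t \<Longrightarrow> t \<le> n \<Longrightarrow> eqv (bk_rels n) [A t s, A s r] [A t r, A t s]"
  by (rule rel0) (auto simp: bk_rels_def)
lemma bk3: "1 \<le> r \<Longrightarrow> r < s \<Longrightarrow> s < t \<Longrightarrow> t \<le> n \<Longrightarrow> eqv (bk_rels n) [A t r, A t s] [A s r, A t r]"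
  by (rule rel0) (auto simp: bk_rels_def)
lemma bk4: "pr n t s \<Longrightarrow> eqv (bk_rels n) [A t s, Ainv t s] []"
  by (rule rel0) (auto simp: bk_rels_def)
lemma bk5: "pr n t s \<Longrightarrow> eqv (bk_rels n) [Ainv t s, A t s] []"
  by (rule rel0) (auto simp: bk_rels_def)
lemma bk6: "pr n t s \<Longrightarrow> pr n r q \<Longrightarrow> sep t s r q \<Longrightarrow> eqv (bk_rels n) [A t s, B r q] [B r q, A t s]"
  by (rule rel0) (auto simp: bk_rels_def)
lemma bk7: "pr n t s \<Longrightarrow> eqv (bk_rels n) [A t s, B t s] [B t s, A t s]"
  by (rule rel0) (auto simp: bk_rels_def)
lemma bk8: "1 \<le> r \<Longrightarrow> r < s \<Longrightarrow> s < t \<Longrightarrow> t \<le> n \<Longrightarrow> eqv (bk_rels n) [A t s, B s r] [B t r, A t s]"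
  by (rule rel0) (auto simp: bk_rels_def)
lemma bk9: "1 \<le> r \<Longrightarrow> r < s \<Longrightarrow> s < t \<Longrightarrow> t \<le> n \<Longrightarrow> eqv (bk_rels n) [A s r, B t r] [B t s, A s r]"
  by (rule rel0) (auto simp: bk_rels_def)
lemma bk10: "1 \<le> r \<Longrightarrow> r < s \<Longrightarrow> s < t \<Longrightarrow> t \<le> n \<Longrightarrow> eqv (bk_rels n) [A t r, B t s] [B s r, A t r]"
  by (rule rel0) (auto simp: bk_rels_def)
lemma bk11: "pr n t s \<Longrightarrow> pr n r q \<Longrightarrow> sep t s r q \<Longrightarrow> eqv (bk_rels n) [B t s, B r q] [B r q, B t s]"
  by (rule rel0) (auto simp: bk_rels_def)

lemma sep_adj: assumes "\<bar>int i - int j\<bar> > 1" shows "sep (Suc i) i (Suc j) j"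
proof -
  define d where "d = int i - int j"
  have e: "(int (Suc i) - int (Suc j)) * (int (Suc i) - int j) * (int i - int (Suc j)) * (int i - int j) = (d*d) * (d*d - 1)"
    by (simp add: d_def algebra_simps)
  have "\<bar>d\<bar> * \<bar>d\<bar> > 1 * 1" using assms d_def by (intro mult_strict_mono) auto
  then have "d*d > 1" by (simp add: abs_mult[symmetric])
  then have "(d*d) * (d*d - 1) > 0" using mult_pos_pos[of "d*d" "d*d - 1"] by linarith
  then show ?thesis unfolding sep_def using e by simp
qed

lemma ps_rel: assumes "(x,y) \<in> sb_rels n" shows "eqv (bk_rels n) (map ps x) (map ps y)"
  using assms unfolding sb_rels_def
proof (elim UnE)
  assume "(x, y) \<in> {([Sig i, Sig j], [Sig j, Sig i]) |i j. 1 \<le> i \<and> i < n \<and> 1 \<le> j \<and> j < n \<and> 1 < \<bar>int i - int j\<bar>}"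
  then show ?thesis by clarsimp (rule bk1; auto simp: pr_def sep_adj)
next
  assume "(x, y) \<in> {([X i, X j], [X j, X i]) |i j. 1 \<le> i \<and> i < n \<and> 1 \<le> j \<and> j < n \<and> 1 < \<bar>int i - int j\<bar>}"
  then show ?thesis by clarsimp (rule bk11; auto simp: pr_def sep_adj)
next
  assume "(x, y) \<in> {([X i, Sig j], [Sig j, X i]) |i j. 1 \<le> i \<and> i < n \<and> 1 \<le> j \<and> j < n \<and> \<bar>int i - int j\<bar> \<noteq> 1}"
  then obtain i j where h: "x = [X i, Sig j]" "y = [Sig j, X i]" "1 \<le> i" "i < n" "1 \<le> j" "j < n" "\<bar>int i - int j\<bar> \<noteq> 1" by blast
  show ?thesis
  proof (cases "i = j")
    case True then show ?thesis using h by simp (rule eqv.sym, rule bk7, simp add: pr_def)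
  next
    case False
    then have "\<bar>int j - int i\<bar> > 1" using h by auto
    then show ?thesis using h by simp (rule eqv.sym, rule bk6, auto simp: pr_def sep_adj)
  qed
next
  assume "(x, y) \<in> {([Sig i, Sig (i + 1), Sig i], [Sig (i + 1), Sig i, Sig (i + 1)]) |i. 1 \<le> i \<and> i + 1 < n}"
  then obtain i where h: "x = [Sig i, Sig (i + 1), Sig i]" "y = [Sig (i + 1), Sig i, Sig (i + 1)]" "1 \<le> i" "i + 1 < n" by blast
  let ?T = "Suc (Suc i)" and ?S = "Suc i" and ?R = i
  have b2: "eqv (bk_rels n) [A ?T ?S, A ?S ?R] [A ?T ?R, A ?T ?S]" using h by (intro bk2) auto
  have b3: "eqv (bk_rels n) [A ?T ?R, A ?T ?S] [A ?S ?R, A ?T ?R]" using h by (intro bk3) auto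
  have L: "eqv (bk_rels n) ([A ?S ?R] @ [A ?T ?S, A ?S ?R] @ []) ([A ?S ?R] @ [A ?S ?R, A ?T ?R] @ [])"
    by (intro stp eqv.trans[OF b2 b3])
  have R1: "eqv (bk_rels n) ([] @ [A ?T ?S, A ?S ?R] @ [A ?T ?S]) ([] @ [A ?S ?R, A ?T ?R] @ [A ?T ?S])"
    by (intro stp eqv.trans[OF b2 b3])
  have R2: "eqv (bk_rels n) ([A ?S ?R] @ [A ?T ?R, A ?T ?S] @ []) ([A ?S ?R] @ [A ?S ?R, A ?T ?R] @ [])"
    by (intro stp b3)
  have "eqv (bk_rels n) [A ?S ?R, A ?T ?S, A ?S ?R] [A ?T ?S, A ?S ?R, A ?T ?S]"
    using join[OF L[simplified] eqv.trans[OF R1[simplified] R2[simplified]]] .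
  then show ?thesis using h by simp
next
  assume "(x, y) \<in> {([Sig i, Sig (i + 1), X i], [X (i + 1), Sig i, Sig (i + 1)]) |i. 1 \<le> i \<and> i + 1 < n}"
  then obtain i where h: "x = [Sig i, Sig (i + 1), X i]" "y = [X (i + 1), Sig i, Sig (i + 1)]" "1 \<le> i" "i + 1 < n" by blast
  let ?T = "Suc (Suc i)" and ?S = "Suc i" and ?R = i
  have 1: "eqv (bk_rels n) ([A ?S ?R] @ [A ?T ?S, B ?S ?R] @ []) ([A ?S ?R] @ [B ?T ?R, A ?T ?S] @ [])"
    using h by (intro stp bk8) auto
  have 2: "eqv (bk_rels n) ([] @ [A ?S ?R, B ?T ?R] @ [A ?T ?S]) ([] @ [B ?T ?S, A ?S ?R] @ [A ?T ?S])"
    using h by (intro stp bk9) auto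
  show ?thesis using eqv.trans[OF 1[simplified] 2[simplified]] h by simp
next
  assume "(x, y) \<in> {([Sig (i + 1), Sig i, X (i + 1)], [X i, Sig (i + 1), Sig i]) |i. 1 \<le> i \<and> i + 1 < n}"
  then obtain i where h: "x = [Sig (i + 1), Sig i, X (i + 1)]" "y = [X i, Sig (i + 1), Sig i]" "1 \<le> i" "i + 1 < n" by blast
  let ?T = "Suc (Suc i)" and ?S = "Suc i" and ?R = i
  have 1: "eqv (bk_rels n) ([] @ [A ?T ?S, A ?S ?R] @ [B ?T ?S]) ([] @ [A ?T ?R, A ?T ?S] @ [B ?T ?S])"
    using h by (intro stp bk2) auto
  have 2: "eqv (bk_rels n) ([A ?T ?R] @ [A ?T ?S, B ?T ?S] @ []) ([A ?T ?R] @ [B ?T ?S, A ?T ?S] @ [])"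
    using h by (intro stp bk7) (auto simp: pr_def)
  have 3: "eqv (bk_rels n) ([] @ [A ?T ?R, B ?T ?S] @ [A ?T ?S]) ([] @ [B ?S ?R, A ?T ?R] @ [A ?T ?S])"
    using h by (intro stp bk10) auto
  have 4: "eqv (bk_rels n) ([B ?S ?R] @ [A ?T ?R, A ?T ?S] @ []) ([B ?S ?R] @ [A ?T ?S, A ?S ?R] @ [])"
    using h by (intro stp eqv.sym[OF bk2]) auto
  show ?thesis using eqv.trans[OF 1[simplified] eqv.trans[OF 2[simplified] eqv.trans[OF 3[simplified] 4[simplified]]]] h by simp
next
  assume "(x, y) \<in> {([Sig i, SigInv i], []) |i. 1 \<le> i \<and> i < n}"
  then show ?thesis by clarsimp (rule bk4, simp add: pr_def)
next
  assume "(x, y) \<in> {([SigInv i, Sig i], []) |i. 1 \<le> i \<and> i < n}"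
  then show ?thesis by clarsimp (rule bk5, simp add: pr_def)
qed

lemma ps_hom: "eqv (sb_rels n) u v \<Longrightarrow> eqv (bk_rels n) (map ps u) (map ps v)"
proof (induction rule: eqv.induct)
  case (refl w) then show ?case by (rule eqv.refl)
next
  case (sym w v) then show ?case using eqv.sym by blast
next
  case (trans u v w) then show ?case using eqv.trans by blast
next
  case (rel x y u v) then show ?case by (simp only: map_append) (intro stp ps_rel)
qed

lemma conjp: "eqv R (p@x) (y@p) \<Longrightarrow> eqv R (p@p') [] \<Longrightarrow> eqv R (p@x@p') y"
proof -
  assume a: "eqv R (p@x) (y@p)" "eqv R (p@p') []"
  have "eqv R ((p@x)@p') ((y@p)@p')" using eqv_app_r[OF a(1)] .
  also have "(y@p)@p' = y @ (p@p') @ []" by simp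
  also have "eqv R \<dots> (y @ [] @ [])" by (rule stp[OF a(2)])
  finally show ?thesis by simp
qed

lemma ps_gen: assumes "eqv (bk_rels n) (map ps (conj_word k s c)) [G]"
    "eqv (bk_rels n) ([A (Suc k) k] @ [G]) ([G'] @ [A (Suc k) k])"
    "eqv (bk_rels n) ([A (Suc k) k] @ [Ainv (Suc k) k]) []" "s < k"
  shows "eqv (bk_rels n) (map ps (conj_word (Suc k) s c)) [G']"
proof -
  have "map ps (conj_word (Suc k) s c) = [A (Suc k) k] @ map ps (conj_word k s c) @ [Ainv (Suc k) k]"
    using assms(4) by (simp add: cw_step)
  also have "eqv (bk_rels n) \<dots> ([A (Suc k) k] @ [G] @ [Ainv (Suc k) k])" by (rule stp[OF assms(1)])
  also have "eqv (bk_rels n) \<dots> [G']" by (rule conjp[OF assms(2,3)])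
  finally show ?thesis .
qed

lemma ps_img: "Suc s \<le> t \<Longrightarrow> 1 \<le> s \<Longrightarrow> t \<le> n \<Longrightarrow>
         eqv (bk_rels n) (map ps (conj_word t s (Sig s))) [A t s] \<and>
         eqv (bk_rels n) (map ps (conj_word t s (SigInv s))) [Ainv t s] \<and>
         eqv (bk_rels n) (map ps (conj_word t s (X s))) [B t s]"
proof (induction t rule: dec_induct)
  case base then show ?case by (simp add: conj_word_def eqv.refl)
next
  case (step k)
  have k: "s < k" "Suc k \<le> n" "1 \<le> s" using step by auto
  have i4: "eqv (bk_rels n) ([A (Suc k) k] @ [Ainv (Suc k) k]) []" using bk4[of n "Suc k" k] k by (simp add: pr_def)
  have IH: "eqv (bk_rels n) (map ps (conj_word k s (Sig s))) [A k s]"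
           "eqv (bk_rels n) (map ps (conj_word k s (SigInv s))) [Ainv k s]"
           "eqv (bk_rels n) (map ps (conj_word k s (X s))) [B k s]" using step k by auto
  have b2: "eqv (bk_rels n) ([A (Suc k) k] @ [A k s]) ([A (Suc k) s] @ [A (Suc k) k])" using bk2[of s k "Suc k" n] k by simp
  have b8: "eqv (bk_rels n) ([A (Suc k) k] @ [B k s]) ([B (Suc k) s] @ [A (Suc k) k])" using bk8[of s k "Suc k" n] k by simp
  have b2i: "eqv (bk_rels n) ([A (Suc k) k] @ [Ainv k s]) ([Ainv (Suc k) s] @ [A (Suc k) k])"
    using inv_conj[OF b2, of "[Ainv k s]" "[Ainv (Suc k) s]"] bk4[of n k s] bk5[of n "Suc k" s] k by (simp add: pr_def)
  show ?case using ps_gen[OF IH(1) b2 i4 k(1)] ps_gen[OF IH(2) b2i i4 k(1)] ps_gen[OF IH(3) b8 i4 k(1)] by simp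
qed




lemma img_ps: "img (ps e) = [e]" by (cases e) (simp_all add: conj_word_def)

lemma phi_ps: "phi (map ps u) = u" by (induct u) (auto simp: phi_def img_ps)

lemma img_gen: "g \<in> bk_gens n \<Longrightarrow> eqv (bk_rels n) (map ps (img g)) [g]"
  unfolding bk_gens_def using ps_img by (auto simp: Suc_le_eq)

lemma ps_phi: "set w \<subseteq> bk_gens n \<Longrightarrow> eqv (bk_rels n) (map ps (phi w)) w"
proof (induction w)
  case Nil then show ?case by (simp add: phi_def eqv.refl)
next
  case (Cons g w)
  have "map ps (phi (g#w)) = map ps (img g) @ map ps (phi w)" by (simp add: phi_def)
  moreover have "eqv (bk_rels n) (map ps (img g) @ map ps (phi w)) ([g] @ w)"
    using Cons by (intro eqv_cong img_gen) auto
  ultimately show ?case by simp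
qed

lemma ps_gens: "set u \<subseteq> sb_gens n \<Longrightarrow> set (map ps u) \<subseteq> bk_gens n"
  by (auto simp: sb_gens_def bk_gens_def)

theorem theorem4p1:
  fixes n :: nat
  assumes "n \<ge> 2"
  shows "(\<forall>w1 w2. set w1 \<subseteq> bk_gens n \<longrightarrow> set w2 \<subseteq> bk_gens n \<longrightarrow>
            (eqv (bk_rels n) w1 w2 \<longleftrightarrow> eqv (sb_rels n) (phi w1) (phi w2)))
       \<and> (\<forall>u. set u \<subseteq> sb_gens n \<longrightarrow>
            (\<exists>w. set w \<subseteq> bk_gens n \<and> eqv (sb_rels n) (phi w) u))"
proof (intro conjI allI impI)
  fix w1 w2 assume h: "set w1 \<subseteq> bk_gens n" "set w2 \<subseteq> bk_gens n"
  show "eqv (bk_rels n) w1 w2 \<longleftrightarrow> eqv (sb_rels n) (phi w1) (phi w2)"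
  proof
    assume "eqv (bk_rels n) w1 w2" then show "eqv (sb_rels n) (phi w1) (phi w2)" by (rule phi_hom)
  next
    assume "eqv (sb_rels n) (phi w1) (phi w2)"
    then have "eqv (bk_rels n) (map ps (phi w1)) (map ps (phi w2))" by (rule ps_hom)
    then show "eqv (bk_rels n) w1 w2"
      using ps_phi[OF h(1)] ps_phi[OF h(2)] eqv.sym eqv.trans by metis
  qed
next
  fix u assume "set u \<subseteq> sb_gens n"
  then show "\<exists>w. set w \<subseteq> bk_gens n \<and> eqv (sb_rels n) (phi w) u"
    using ps_gens phi_ps eqv.refl by metis
qed


end
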